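(* Let $G$ be a connected graph and let $H$ be a connected component of the complement $\overline{G}$ such that $H$ is isomorphic to the star $K_{1,n}$ for some $n\geq 2$. Then no vertex of $H$ is a basis forced vertex of $G$.
   Context: All graphs are finite and simple. $\overline{G}$ denotes the complement graph. For vertices $u,v$ of a connected graph $G$, $d(u,v)$ is the length of a shortest $u$–$v$ path. A set $R\subseteq V(G)$ is a resolving set if for all distinct $x,y\in V(G)$ there is $r\in R$ with $d(r,x)\neq d(r,y)$. The metric dimension $\dim(G)$ is the minimum cardinality of a resolving set, and a resolving set of cardinality $\dim(G)$ is a metric basis. A vertex is a basis forced vertex if it belongs to every metric basis of $G$. *)

theory Defs
  imports Main
begin

definition simple_graph :: "'a set \<Rightarrow> ('a \<Rightarrow> 'a \<Rightarrow> bool) \<Rightarrow> bool" where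
  "simple_graph V E \<longleftrightarrow> finite V \<and> (\<forall>u v. E u v \<longrightarrow> u \<in> V \<and> v \<in> V)
     \<and> (\<forall>u v. E u v \<longrightarrow> E v u) \<and> (\<forall>v. \<not> E v v)"

fun is_walk :: "'a set \<Rightarrow> ('a \<Rightarrow> 'a \<Rightarrow> bool) \<Rightarrow> 'a list \<Rightarrow> bool" where
  "is_walk V E [] = False"
| "is_walk V E [v] = (v \<in> V)"
| "is_walk V E (u # v # xs) = (u \<in> V \<and> E u v \<and> is_walk V E (v # xs))"

definition reachable :: "'a set \<Rightarrow> ('a \<Rightarrow> 'a \<Rightarrow> bool) \<Rightarrow> 'a \<Rightarrow> 'a \<Rightarrow> bool" where
  "reachable V E u v \<longleftrightarrow> (\<exists>xs. is_walk V E xs \<and> hd xs = u \<and> last xs = v)"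

definition connected_graph :: "'a set \<Rightarrow> ('a \<Rightarrow> 'a \<Rightarrow> bool) \<Rightarrow> bool" where
  "connected_graph V E \<longleftrightarrow> V \<noteq> {} \<and> (\<forall>u\<in>V. \<forall>v\<in>V. reachable V E u v)"

definition dist :: "'a set \<Rightarrow> ('a \<Rightarrow> 'a \<Rightarrow> bool) \<Rightarrow> 'a \<Rightarrow> 'a \<Rightarrow> nat" where
  "dist V E u v = (LEAST k. \<exists>xs. is_walk V E xs \<and> hd xs = u \<and> last xs = v \<and> length xs = Suc k)"

definition resolving_set :: "'a set \<Rightarrow> ('a \<Rightarrow> 'a \<Rightarrow> bool) \<Rightarrow> 'a set \<Rightarrow> bool" where
  "resolving_set V E R \<longleftrightarrow> R \<subseteq> V \<and>
     (\<forall>x\<in>V. \<forall>y\<in>V. x \<noteq> y \<longrightarrow> (\<exists>r\<in>R. dist V E r x \<noteq> dist V E r y))"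

definition metric_dim :: "'a set \<Rightarrow> ('a \<Rightarrow> 'a \<Rightarrow> bool) \<Rightarrow> nat" where
  "metric_dim V E = (LEAST k. \<exists>R. resolving_set V E R \<and> card R = k)"

definition metric_basis :: "'a set \<Rightarrow> ('a \<Rightarrow> 'a \<Rightarrow> bool) \<Rightarrow> 'a set \<Rightarrow> bool" where
  "metric_basis V E R \<longleftrightarrow> resolving_set V E R \<and> card R = metric_dim V E"

definition basis_forced :: "'a set \<Rightarrow> ('a \<Rightarrow> 'a \<Rightarrow> bool) \<Rightarrow> 'a \<Rightarrow> bool" where
  "basis_forced V E v \<longleftrightarrow> v \<in> V \<and> (\<forall>R. metric_basis V E R \<longrightarrow> v \<in> R)"

definition compl_edges :: "'a set \<Rightarrow> ('a \<Rightarrow> 'a \<Rightarrow> bool) \<Rightarrow> 'a \<Rightarrow> 'a \<Rightarrow> bool" where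
  "compl_edges V E u v \<longleftrightarrow> u \<in> V \<and> v \<in> V \<and> u \<noteq> v \<and> \<not> E u v"

definition components :: "'a set \<Rightarrow> ('a \<Rightarrow> 'a \<Rightarrow> bool) \<Rightarrow> 'a set set" where
  "components V E = {{v. reachable V E u v} | u. u \<in> V}"

definition induced_edges :: "'a set \<Rightarrow> ('a \<Rightarrow> 'a \<Rightarrow> bool) \<Rightarrow> 'a \<Rightarrow> 'a \<Rightarrow> bool" where
  "induced_edges C E u v \<longleftrightarrow> u \<in> C \<and> v \<in> C \<and> E u v"

definition graph_iso :: "'a set \<Rightarrow> ('a \<Rightarrow> 'a \<Rightarrow> bool) \<Rightarrow> 'b set \<Rightarrow> ('b \<Rightarrow> 'b \<Rightarrow> bool) \<Rightarrow> bool" where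
  "graph_iso V1 E1 V2 E2 \<longleftrightarrow> (\<exists>f. bij_betw f V1 V2 \<and>
     (\<forall>x\<in>V1. \<forall>y\<in>V1. E1 x y \<longleftrightarrow> E2 (f x) (f y)))"

definition star_vertices :: "nat \<Rightarrow> nat set" where
  "star_vertices n = {0..n}"

definition star_edges :: "nat \<Rightarrow> nat \<Rightarrow> nat \<Rightarrow> bool" where
  "star_edges n a b \<longleftrightarrow> a \<le> n \<and> b \<le> n \<and> ((a = 0 \<and> b \<noteq> 0) \<or> (b = 0 \<and> a \<noteq> 0))"

end

theory Submission
  imports Defs
begin

lemma walk_snoc: "is_walk V E xs \<Longrightarrow> E (last xs) y \<Longrightarrow> y \<in> V \<Longrightarrow> is_walk V E (xs @ [y])"
  by (induction V E xs rule: is_walk.induct) auto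

lemma walk_last: "is_walk V E xs \<Longrightarrow> last xs \<in> V"
  by (induction V E xs rule: is_walk.induct) auto

lemma walk_hd_step: "is_walk V E xs \<Longrightarrow> hd xs \<noteq> last xs \<Longrightarrow> \<exists>z. E (hd xs) z"
  by (cases "(V,E,xs)" rule: is_walk.cases) auto

lemma walk_len1: "is_walk V E xs \<Longrightarrow> length xs = Suc 0 \<Longrightarrow> hd xs = last xs"
  by (cases xs) auto

lemma walk_len2: "is_walk V E xs \<Longrightarrow> length xs = Suc (Suc 0) \<Longrightarrow> E (hd xs) (last xs)"
  by (cases "(V,E,xs)" rule: is_walk.cases) auto

lemma dist_0: "x \<in> V \<Longrightarrow> dist V E x x = 0"
  unfolding dist_def
  by (rule Least_equality) (rule exI[of _ "[x]"], auto)

lemma dist_1: "x \<in> V \<Longrightarrow> y \<in> V \<Longrightarrow> x \<noteq> y \<Longrightarrow> E x y \<Longrightarrow> dist V E x y = 1"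
  unfolding dist_def
proof (rule Least_equality)
  assume "x \<in> V" "y \<in> V" "E x y"
  then show "\<exists>xs. is_walk V E xs \<and> hd xs = x \<and> last xs = y \<and> length xs = Suc 1"
    by (intro exI[of _ "[x,y]"]) auto
next
  fix k assume "x \<noteq> y" "\<exists>xs. is_walk V E xs \<and> hd xs = x \<and> last xs = y \<and> length xs = Suc k"
  then show "1 \<le> k" using walk_len1 by (cases k) fastforce+
qed

lemma dist_2: "x \<in> V \<Longrightarrow> y \<in> V \<Longrightarrow> w \<in> V \<Longrightarrow> x \<noteq> y \<Longrightarrow> \<not> E x y \<Longrightarrow> E x w \<Longrightarrow> E w y
   \<Longrightarrow> dist V E x y = 2"
  unfolding dist_def
proof (rule Least_equality)
  assume "x \<in> V" "y \<in> V" "w \<in> V" "E x w" "E w y"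
  then show "\<exists>xs. is_walk V E xs \<and> hd xs = x \<and> last xs = y \<and> length xs = Suc 2"
    by (intro exI[of _ "[x,w,y]"]) auto
next
  fix k assume "x \<noteq> y" "\<not> E x y" "\<exists>xs. is_walk V E xs \<and> hd xs = x \<and> last xs = y \<and> length xs = Suc k"
  then obtain xs where "is_walk V E xs" "hd xs = x" "last xs = y" "length xs = Suc k" by blast
  moreover have "k \<noteq> 0" using walk_len1 calculation \<open>x \<noteq> y\<close> by fastforce
  moreover have "k \<noteq> 1" using walk_len2 calculation \<open>\<not> E x y\<close> by fastforce
  ultimately show "2 \<le> k" by linarith
qed


lemma card_swap: "finite R \<Longrightarrow> a \<in> R \<Longrightarrow> b \<notin> R \<Longrightarrow> card (insert b (R - {a})) = card R"
  by (simp add: card_Diff_singleton) (metis card_gt_0_iff empty_iff Suc_pred)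

theorem lemma6:
  fixes V :: "'a set" and E :: "'a \<Rightarrow> 'a \<Rightarrow> bool" and C :: "'a set" and n :: nat
  assumes "simple_graph V E"
    and "connected_graph V E"
    and "C \<in> components V (compl_edges V E)"
    and "n \<ge> 2"
    and "graph_iso C (induced_edges C (compl_edges V E)) (star_vertices n) (star_edges n)"
  shows "\<forall>v\<in>C. \<not> basis_forced V E v"
proof -
  note sg = assms(1)[unfolded simple_graph_def]
  have finV: "finite V" and Ein: "\<And>u v. E u v \<Longrightarrow> u \<in> V \<and> v \<in> V"
    and Esym: "\<And>u v. E u v \<Longrightarrow> E v u" and Eirr: "\<And>v. \<not> E v v" using sg by auto
  let ?CE = "compl_edges V E"
  obtain u where uV: "u \<in> V" and Cdef: "C = {v. reachable V ?CE u v}"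
    using assms(3) unfolding components_def by blast
  have CV: "C \<subseteq> V" unfolding Cdef reachable_def using walk_last by blast
  have clos: "y \<in> C" if "x \<in> C" "?CE x y" for x y
  proof -
    from that obtain xs where "is_walk V ?CE xs" "hd xs = u" "last xs = x"
      unfolding Cdef reachable_def by blast
    moreover have "y \<in> V" using that(2) unfolding compl_edges_def by blast
    ultimately have "is_walk V ?CE (xs @ [y])" "hd (xs @ [y]) = u" "last (xs @ [y]) = y"
      using walk_snoc[of V ?CE xs y] that(2) by (auto simp: hd_append)
    then show ?thesis unfolding Cdef reachable_def by blast
  qed
  have out: "E x y" if "x \<in> C" "y \<in> V" "y \<notin> C" for x y
  proof (rule ccontr)
    assume "\<not> E x y"
    then have "?CE x y" using that CV unfolding compl_edges_def by auto
    then show False using clos that by blast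
  qed
  obtain f where bij: "bij_betw f C {0..n}"
    and iso: "\<And>x y. x \<in> C \<Longrightarrow> y \<in> C \<Longrightarrow> induced_edges C ?CE x y \<longleftrightarrow> star_edges n (f x) (f y)"
    using assms(5) unfolding graph_iso_def star_vertices_def by blast
  define c where "c = inv_into C f 0"
  have cC: "c \<in> C" and fc: "f c = 0" unfolding c_def using bij
    by (auto simp: bij_betw_def inv_into_into f_inv_into_f)
  define L where "L = C - {c}"
  have fle: "x \<in> C \<Longrightarrow> f x \<le> n" for x using bij by (auto simp: bij_betw_def)
  have finj: "x \<in> C \<Longrightarrow> y \<in> C \<Longrightarrow> f x = f y \<Longrightarrow> x = y" for x y
    using bij by (auto simp: bij_betw_def inj_on_def)
  have EC: "E x y \<longleftrightarrow> x \<noteq> c \<and> y \<noteq> c" if "x \<in> C" "y \<in> C" "x \<noteq> y" for x y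
  proof -
    have "E x y \<longleftrightarrow> \<not> induced_edges C ?CE x y"
      using that CV unfolding induced_edges_def compl_edges_def by auto
    also have "\<dots> \<longleftrightarrow> \<not> star_edges n (f x) (f y)" using iso that by simp
    also have "\<dots> \<longleftrightarrow> f x \<noteq> 0 \<and> f y \<noteq> 0"
      using fle[OF that(1)] fle[OF that(2)] finj[OF that(1,2)] that(3)
      unfolding star_edges_def by auto
    also have "\<dots> \<longleftrightarrow> x \<noteq> c \<and> y \<noteq> c" using finj fc that cC by metis
    finally show ?thesis .
  qed
  have cardC: "card C = Suc n" using bij_betw_same_card[OF bij] by simp
  have finC: "finite C" using CV finV finite_subset by blast
  have cardL: "card L = n" unfolding L_def using cardC cC finC by simp
  obtain a1 a2 where a12: "a1 \<in> L" "a2 \<in> L" "a1 \<noteq> a2"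
  proof -
    have "2 \<le> card L" using cardL assms(4) by simp
    then obtain B where "B \<subseteq> L" "card B = 2" by (meson obtain_subset_with_card_n)
    then show ?thesis using that by (auto simp: card_2_iff)
  qed
  have LC: "L \<subseteq> C" unfolding L_def by auto
  have cL: "c \<notin> L" unfolding L_def by auto
  obtain w where wV: "w \<in> V" and wC: "w \<notin> C"
  proof (rule ccontr)
    assume "\<not> thesis"
    with that have VC: "V \<subseteq> C" by blast
    have "reachable V E c a1" using assms(2) cC a12 LC CV unfolding connected_graph_def by blast
    then obtain xs where "is_walk V E xs" "hd xs = c" "last xs = a1" unfolding reachable_def by blast
    moreover have "c \<noteq> a1" using cL a12 by blast
    ultimately obtain z where "E c z" using walk_hd_step by metis
    then have "z \<in> C" "z \<noteq> c" using Ein VC Eirr by blast+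
    then show False using EC[OF cC] \<open>E c z\<close> by auto
  qed
  have Dform: "dist V E x y = (if x = y then 0 else if E x y then 1 else 2)"
    if "x \<in> V" "y \<in> V" for x y
  proof (cases "x = y")
    case True then show ?thesis using dist_0 that by simp
  next
    case ne: False
    show ?thesis
    proof (cases "E x y")
      case True then show ?thesis using dist_1 that ne by simp
    next
      case nE: False
      have "\<exists>z\<in>V. E x z \<and> E z y"
      proof (cases "x \<in> C")
        case True
        then have "y \<in> C" using out that nE by blast
        then show ?thesis using True out wV wC Esym that by blast
      next
        case False
        then have "y \<notin> C" using out that nE Esym by blast
        then show ?thesis using False out cC CV that Esym by blast
      qed
      then show ?thesis using dist_2 that ne nE by fastforce
    qed
  qed
  have sep: "dist V E r x \<noteq> dist V E r y \<longleftrightarrow> r = x \<or> r = y \<or> E r x \<noteq> E r y"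
    if "r \<in> V" "x \<in> V" "y \<in> V" "x \<noteq> y" for r x y
    using Dform that Eirr by auto
  have res: "resolving_set V E R \<longleftrightarrow> R \<subseteq> V \<and>
     (\<forall>x\<in>V. \<forall>y\<in>V. x \<noteq> y \<longrightarrow> (\<exists>r\<in>R. r = x \<or> r = y \<or> E r x \<noteq> E r y))" for R
    unfolding resolving_set_def using sep by (smt (verit) subsetD)
  have Ec: "E c y \<longleftrightarrow> y \<notin> C" if "y \<in> V" for y
    using that out[OF cC] EC[OF cC] Eirr LC cL by (metis DiffI L_def singletonD)
  have El: "E l y \<longleftrightarrow> y \<noteq> l \<and> y \<noteq> c" if "l \<in> L" "y \<in> V" for l y
  proof (cases "y \<in> C")
    case True then show ?thesis using EC[of l y] that LC cL Eirr by auto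
  next
    case False then show ?thesis using out[of l y] that LC cC by auto
  qed
  have LV: "L \<subseteq> V" using LC CV by blast
  have cV: "c \<in> V" using cC CV by blast
  have Vres: "resolving_set V E V" unfolding res by auto
  have dimex: "\<exists>R. resolving_set V E R \<and> card R = metric_dim V E"
    unfolding metric_dim_def by (rule LeastI_ex) (use Vres in blast)
  have dimle: "metric_dim V E \<le> card R" if "resolving_set V E R" for R
    unfolding metric_dim_def by (rule Least_le) (use that in blast)
  have finR: "finite R" if "resolving_set V E R" for R
    using that finV finite_subset unfolding resolving_set_def by blast
  have stepA: "\<exists>R b. metric_basis V E R \<and> b \<in> L \<and> b \<notin> R"
  proof -
    obtain R where R: "resolving_set V E R" "card R = metric_dim V E" using dimex by blast
    show ?thesis
    proof (cases "L \<subseteq> R")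
      case False then show ?thesis using R unfolding metric_basis_def by blast
    next
      case True
      let ?R1 = "insert c (R - {a1})"
      have R1: "resolving_set V E ?R1"
        unfolding res
      proof (intro conjI ballI impI)
        show "?R1 \<subseteq> V" using R(1) cV unfolding res by blast
      next
        fix x y assume xy: "x \<in> V" "y \<in> V" "x \<noteq> y"
        then obtain r where r: "r \<in> R" "r = x \<or> r = y \<or> E r x \<noteq> E r y" using R(1) unfolding res by blast
        show "\<exists>r\<in>?R1. r = x \<or> r = y \<or> E r x \<noteq> E r y"
        proof (cases "r = a1")
          case False then show ?thesis using r by blast
        next
          case ra: True
          show ?thesis
          proof (cases "x = c \<or> y = c")
            case True then show ?thesis by blast
          next
            case nc: False
            have "x = a1 \<or> y = a1" using r ra El[OF a12(1)] xy nc by auto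
            then show ?thesis
            proof
              assume xa: "x = a1"
              show ?thesis
              proof (cases "y \<in> L")
                case True then show ?thesis using \<open>L \<subseteq> R\<close> xa xy by blast
              next
                case False
                then have "y \<notin> C" using nc L_def by blast
                then show ?thesis using Ec xy xa a12 LC by (intro bexI[of _ c]) auto
              qed
            next
              assume ya: "y = a1"
              show ?thesis
              proof (cases "x \<in> L")
                case True then show ?thesis using \<open>L \<subseteq> R\<close> ya xy by blast
              next
                case False
                then have "x \<notin> C" using nc L_def by blast
                then show ?thesis using Ec xy ya a12 LC by (intro bexI[of _ c]) auto
              qed
            qed
          qed
        qed
      qed
      have cR: "c \<notin> R"
      proof
        assume "c \<in> R"
        then have "?R1 = R - {a1}" using cL a12 by auto
        then have "card ?R1 < card R" using finR[OF R(1)] True a12 by (metis card_Diff1_less subsetD)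
        then show False using dimle[OF R1] R(2) by simp
      qed
      have "card ?R1 = card R" using card_swap[OF finR[OF R(1)], of a1 c] cR True a12 by blast
      then show ?thesis using R1 R(2) a12 cL unfolding metric_basis_def by auto
    qed
  qed
  then obtain R b where R: "resolving_set V E R" "card R = metric_dim V E" and bL: "b \<in> L" and bR: "b \<notin> R"
    unfolding metric_basis_def by blast
  have LR: "a \<in> R" if aL0: "a \<in> L" and ab0: "a \<noteq> b" for a
  proof (rule ccontr)
    assume aR: "a \<notin> R"
    obtain r where r: "r \<in> R" "r = a \<or> r = b \<or> E r a \<noteq> E r b"
      using R(1) aL0 ab0 bL LV unfolding res by blast
    have rV: "r \<in> V" using r R(1) unfolding res by blast
    have "r \<noteq> a" "r \<noteq> b" using r aR bR by auto
    then have "E r a = E r b" using El[OF aL0 rV] El[OF bL rV] Esym by blast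
    then show False using r \<open>r \<noteq> a\<close> \<open>r \<noteq> b\<close> by blast
  qed
  show ?thesis
  proof (intro ballI)
    fix v assume vC: "v \<in> C"
    have "\<exists>R'. metric_basis V E R' \<and> v \<notin> R'"
    proof (cases "v \<in> R")
      case False then show ?thesis using R unfolding metric_basis_def by blast
    next
      case vR: True
      let ?R2 = "insert b (R - {v})"
      have card2: "card ?R2 = card R" using card_swap[OF finR[OF R(1)] vR bR] .
      have vb: "v \<noteq> b" using vR bR by blast
      have R2: "resolving_set V E ?R2"
      proof (cases "v = c")
        case vc: True
        obtain a where aL: "a \<in> L" and ab: "a \<noteq> b" using a12 by blast
        have aR2: "a \<in> ?R2" using LR[OF aL ab] aL cL vc by auto
        have LR2: "L \<subseteq> ?R2" using LR cL vc by auto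
        show ?thesis unfolding res
        proof (intro conjI ballI impI)
          show "?R2 \<subseteq> V" using R(1) bL LV unfolding res by blast
        next
          fix x y assume xy: "x \<in> V" "y \<in> V" "x \<noteq> y"
          then obtain r where r: "r \<in> R" "r = x \<or> r = y \<or> E r x \<noteq> E r y" using R(1) unfolding res by blast
          show "\<exists>r\<in>?R2. r = x \<or> r = y \<or> E r x \<noteq> E r y"
          proof (cases "r = c")
            case False then show ?thesis using r vc by blast
          next
            case rc: True
            show ?thesis
            proof (cases "x = c \<or> y = c")
              case True
              then show ?thesis using aR2 El[OF aL] xy by (intro bexI[of _ a]) auto
            next
              case nc: False
              then have "E c x \<noteq> E c y" using r rc by blast
              then have "x \<in> L \<or> y \<in> L" using Ec xy nc L_def by auto
              then show ?thesis using LR2 by blast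
            qed
          qed
        qed
      next
        case vnc: False
        then have vL: "v \<in> L" using vC L_def by blast
        define s where "s z = (if z = v then b else if z = b then v else z)" for z
        have ss: "s (s z) = z" for z unfolding s_def by auto
        have sV: "z \<in> V \<Longrightarrow> s z \<in> V" for z using vL bL LV unfolding s_def by auto
        have sE: "E (s p) (s q) = E p q" if "p \<in> V" "q \<in> V" for p q
        proof -
          have Ev: "E v y \<longleftrightarrow> y \<noteq> v \<and> y \<noteq> c" "E y v \<longleftrightarrow> y \<noteq> v \<and> y \<noteq> c"
            "E b y \<longleftrightarrow> y \<noteq> b \<and> y \<noteq> c" "E y b \<longleftrightarrow> y \<noteq> b \<and> y \<noteq> c"
            if "y \<in> V" for y
            using El[OF vL that] El[OF bL that] Esym by blast+
          have cvb: "c \<noteq> v" "c \<noteq> b" using vL bL cL by auto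
          show ?thesis unfolding s_def
            using Ev[OF that(1)] Ev[OF that(2)] vb cvb Eirr by auto
        qed
        show ?thesis unfolding res
        proof (intro conjI ballI impI)
          show "?R2 \<subseteq> V" using R(1) bL LV unfolding res by blast
        next
          fix x y assume xy: "x \<in> V" "y \<in> V" "x \<noteq> y"
          then have "s x \<in> V" "s y \<in> V" "s x \<noteq> s y" using sV ss by metis+
          then obtain r where r: "r \<in> R" "r = s x \<or> r = s y \<or> E r (s x) \<noteq> E r (s y)"
            using R(1) unfolding res by blast
          have rV: "r \<in> V" using r R(1) unfolding res by blast
          have "s r \<in> ?R2" using r(1) bR unfolding s_def by auto
          moreover have "s r = x \<or> s r = y \<or> E (s r) x \<noteq> E (s r) y"
            using r(2) ss sE[OF rV sV[OF xy(1)]] sE[OF rV sV[OF xy(2)]] by metis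
          ultimately show "\<exists>r\<in>?R2. r = x \<or> r = y \<or> E r x \<noteq> E r y" by blast
        qed
      qed
      then show ?thesis using card2 R(2) vb unfolding metric_basis_def by auto
    qed
    then show "\<not> basis_forced V E v" unfolding basis_forced_def by blast
  qed
qed

end
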